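(* Let $(\eta_t)_{t\ge1}$ and $(\gamma_t)_{t\ge1}$ be non-increasing sequences of positive learning rates and exploration factors with $\eta_t\le2\gamma_t$ for all $t$. With probability at least $1-\delta$, FTARLShannon guarantees $$\max_{a\in[K]}\mathrm{Regret}(a)\le\frac{\ln K}{\eta_T}+\frac{\ln(3K/\delta)}{2\gamma_T}+\ln(3/\delta)+\sum_{t=1}^T\Big(\frac{\eta_t}{2}+\gamma_t\Big)A_t.$$
   Context: Sleeping bandits with $K\ge2$ arms: in round $t$ an adaptive (non-oblivious) adversary reveals a set $\mathbb A_t\subseteq[K]$ of active arms (with $A_t=|\mathbb A_t|$) and selects losses $\ell_{i,t}\in[0,1]$; the learner pulls $i_t\in\mathbb A_t$ and observes $\hat\ell_t=\ell_{i_t,t}$. With $I_{i,t}=\mathbb 1\{i\in\mathbb A_t\}$, $\mathrm{Regret}(a)=\sum_{t=1}^TI_{a,t}(\ell_{i_t,t}-\ell_{a,t})$. FTARLShannon: $\tilde L_{i,0}=0$; in round $t$, $q_{i,t}=\frac{\exp(-\eta_t\tilde L_{i,t-1})}{\sum_j\exp(-\eta_t\tilde L_{j,t-1})}$, $p_{i,t}=\frac{I_{i,t}q_{i,t}}{\sum_jI_{j,t}q_{j,t}}$, draw $i_t\sim p_t$; set $\tilde\ell_{i,t}=\frac{\mathbb 1\{i_t=i\}\hat\ell_t}{p_{i,t}+\gamma_t}$ for active $i$ and $\tilde\ell_{i,t}=\hat\ell_t-\gamma_t\sum_{j\in\mathbb A_t}\tilde\ell_{j,t}$ for inactive $i$;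 update $\tilde L_{i,t}=\tilde L_{i,t-1}+\tilde\ell_{i,t}$. *)

theory Defs
  imports "HOL-Probability.Probability"
begin

text \<open>Arms are 0..K-1 (i.e. [K] = {..<K}).
Rounds are numbered 1,2,... . A history is the list of the learner's past pulls
(i_1,...,i_{t-1}); since the learner is deterministic given its past pulls and the
adversary's reactions, this list determines the whole interaction.
An adaptive adversary is given by
  Act t h  : the active set of round t, given the past pulls h,
  ell t h  : the loss vector of round t, given the past pulls h.\<close>

definition qprob :: "nat \<Rightarrow> (nat \<Rightarrow> real) \<Rightarrow> nat \<Rightarrow> (nat \<Rightarrow> real) \<Rightarrow> nat \<Rightarrow> real" where
  "qprob K eta t L i = exp (- eta t * L i) / (\<Sum>j<K. exp (- eta t * L j))"

definition pprob :: "nat \<Rightarrow> (nat \<Rightarrow> real) \<Rightarrow> nat set \<Rightarrow> nat \<Rightarrow> (nat \<Rightarrow> real) \<Rightarrow> nat \<Rightarrow> real" where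
  "pprob K eta A t L i =
     (if i \<in> A then qprob K eta t L i else 0) / (\<Sum>j\<in>A. qprob K eta t L j)"

definition est :: "nat \<Rightarrow> (nat \<Rightarrow> real) \<Rightarrow> (nat \<Rightarrow> real) \<Rightarrow> nat set \<Rightarrow> nat \<Rightarrow>
    (nat \<Rightarrow> real) \<Rightarrow> (nat \<Rightarrow> real) \<Rightarrow> nat \<Rightarrow> nat \<Rightarrow> real" where
  "est K eta gamma A t L l i j =
     (let act = (\<lambda>k. if k = i then l i / (pprob K eta A t L k + gamma t) else 0)
      in if j \<in> A then act j else l i - gamma t * (\<Sum>k\<in>A. act k))"

primrec Lcum :: "nat \<Rightarrow> (nat \<Rightarrow> real) \<Rightarrow> (nat \<Rightarrow> real) \<Rightarrow> (nat \<Rightarrow> nat list \<Rightarrow> nat set) \<Rightarrow>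
    (nat \<Rightarrow> nat list \<Rightarrow> nat \<Rightarrow> real) \<Rightarrow> nat \<Rightarrow> nat list \<Rightarrow> nat \<Rightarrow> real" where
  "Lcum K eta gamma Act ell 0 hs = (\<lambda>j. 0)"
| "Lcum K eta gamma Act ell (Suc s) hs =
     (let L = Lcum K eta gamma Act ell s hs
      in (\<lambda>j. L j + est K eta gamma (Act (Suc s) (take s hs)) (Suc s) L
                        (ell (Suc s) (take s hs)) (hs ! s) j))"

text \<open>Sampling distribution p_t of round t = Suc s given past pulls h (length s).\<close>
definition pdist :: "nat \<Rightarrow> (nat \<Rightarrow> real) \<Rightarrow> (nat \<Rightarrow> real) \<Rightarrow> (nat \<Rightarrow> nat list \<Rightarrow> nat set) \<Rightarrow>
    (nat \<Rightarrow> nat list \<Rightarrow> nat \<Rightarrow> real) \<Rightarrow> nat \<Rightarrow> nat list \<Rightarrow> nat pmf" where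
  "pdist K eta gamma Act ell s h =
     embed_pmf (\<lambda>i. pprob K eta (Act (Suc s) h) (Suc s)
                       (Lcum K eta gamma Act ell s h) i)"

primrec play :: "nat \<Rightarrow> (nat \<Rightarrow> real) \<Rightarrow> (nat \<Rightarrow> real) \<Rightarrow> (nat \<Rightarrow> nat list \<Rightarrow> nat set) \<Rightarrow>
    (nat \<Rightarrow> nat list \<Rightarrow> nat \<Rightarrow> real) \<Rightarrow> nat \<Rightarrow> nat list pmf" where
  "play K eta gamma Act ell 0 = return_pmf []"
| "play K eta gamma Act ell (Suc s) =
     bind_pmf (play K eta gamma Act ell s)
       (\<lambda>h. map_pmf (\<lambda>i. h @ [i]) (pdist K eta gamma Act ell s h))"

definition regret :: "(nat \<Rightarrow> nat list \<Rightarrow> nat set) \<Rightarrow> (nat \<Rightarrow> nat list \<Rightarrow> nat \<Rightarrow> real) \<Rightarrow>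
    nat \<Rightarrow> nat list \<Rightarrow> nat \<Rightarrow> real" where
  "regret Act ell T hs a =
     (\<Sum>t=1..T. (if a \<in> Act t (take (t - 1) hs) then 1 else 0) *
        (ell t (take (t - 1) hs) (hs ! (t - 1)) - ell t (take (t - 1) hs) a))"

end

theory Submission
  imports Defs "HOL-Probability.Probability"
begin

lemma exp_neg_quad:
  fixes x :: real assumes "0 \<le> x" shows "exp (- x) \<le> 1 - x + x^2/2"
proof -
  let ?f = "\<lambda>x::real. 1 - x + x^2/2 - exp (- x)"
  have "?f 0 \<le> ?f x"
  proof (rule DERIV_nonneg_imp_nondecreasing[OF assms])
    fix y :: real assume "0 \<le> y"
    have "DERIV ?f y :> (- 1 + y + exp (- y))"
      by (auto intro!: derivative_eq_intros simp: power2_eq_square)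
    moreover have "0 \<le> - 1 + y + exp (- y)" using exp_ge_add_one_self[of "-y"] by linarith
    ultimately show "\<exists>d. DERIV ?f y :> d \<and> 0 \<le> d" by blast
  qed
  then show ?thesis by simp
qed

lemma ln_lower_pade:
  fixes z :: real assumes "0 \<le> z" shows "2 * z / (2 + z) \<le> ln (1 + z)"
proof -
  let ?f = "\<lambda>z::real. ln (1 + z) - 2 * z / (2 + z)"
  have "?f 0 \<le> ?f z"
  proof (rule DERIV_nonneg_imp_nondecreasing[OF assms])
    fix y :: real assume y: "0 \<le> y"
    have d1: "DERIV (\<lambda>z. ln (1 + z)) y :> 1 / (1 + y)"
      using y by (auto intro!: derivative_eq_intros)
    have d2: "DERIV (\<lambda>z. 2 * z / (2 + z)) y :> (2 * (2 + y) - 1 * (2 * y)) / (2 + y)^2"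
      using y by (intro DERIV_quotient derivative_eq_intros) (auto simp: power2_eq_square)
    have "(2 * (2 + y) - 1 * (2 * y)) / (2 + y)^2 = 4 / (2 + y)^2" by simp
    then have d: "DERIV ?f y :> (1 / (1 + y) - 4 / (2 + y)^2)"
      using DERIV_diff[OF d1 d2] by simp
    have "4 * (1 + y) \<le> (2 + y)^2" by (simp add: power2_eq_square algebra_simps)
    then have "4 / (2 + y)^2 \<le> 1 / (1 + y)" using y
      by (simp add: divide_simps)
    then have "0 \<le> 1 / (1 + y) - 4 / (2 + y)^2" by simp
    with d show "\<exists>d. DERIV ?f y :> d \<and> 0 \<le> d" by blast
  qed
  then show ?thesis by simp
qed

lemma exp_convex_bern:
  fixes r y :: real assumes "0 \<le> r" "r \<le> 1" shows "exp (r * y) \<le> 1 + r * (exp y - 1)"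
proof -
  have c: "convex_on UNIV (\<lambda>x::real. exp (1 * x))" by (rule convex_on_exp) simp
  have "exp (1 * ((1 - r) *\<^sub>R 0 + r *\<^sub>R y)) \<le> (1 - r) * exp (1 * 0) + r * exp (1 * y)"
    using convex_onD[OF c, of r 0 y] assms by simp
  then show ?thesis by (simp add: algebra_simps)
qed


lemma ix_scalar:
  fixes a l p g :: real
  assumes "0 \<le> a" "a \<le> 2 * g" "0 \<le> l" "l \<le> 1" "0 < p" "0 < g"
  shows "exp (a * l / (p + g)) \<le> 1 + a * l / p"
proof -
  have al: "0 \<le> a * l" using assms by simp
  have al2: "a * l \<le> 2 * g" using assms by (smt (verit) mult_left_le)
  define z where "z = a * l / p"
  have z: "0 \<le> z" unfolding z_def using al assms by simp
  have "a * l / (p + g) \<le> 2 * z / (2 + z)"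
  proof -
    have "2 * z / (2 + z) = 2 * (a * l) / (2 * p + a * l)"
      unfolding z_def using assms by (simp add: field_simps)
    moreover have "a * l / (p + g) \<le> 2 * (a * l) / (2 * p + a * l)"
    proof -
      have "a * l * (a * l) \<le> a * l * (2 * g)" by (rule mult_left_mono[OF al2 al])
      then have "a * l * (2 * p + a * l) \<le> 2 * (a * l) * (p + g)"
        by (simp add: algebra_simps)
      then have "a * l * (2 * p + a * l) / ((p + g) * (2 * p + a * l)) \<le> 2 * (a * l) * (p + g) / ((p + g) * (2 * p + a * l))"
        using assms al by (intro divide_right_mono) auto
      moreover have nz: "2 * p + a * l \<noteq> 0" "p + g \<noteq> 0" using assms al by linarith+
      moreover have "a * l * (2 * p + a * l) / ((p + g) * (2 * p + a * l)) = a * l / (p + g)"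
        using nz by (rule_tac nonzero_mult_divide_mult_cancel_right) 
      moreover have "2 * (a * l) * (p + g) / ((p + g) * (2 * p + a * l)) = 2 * (a * l) / (2 * p + a * l)"
        using nz by (simp add: mult.commute)
      ultimately show ?thesis by simp
    qed
    ultimately show ?thesis by simp
  qed
  also have "\<dots> \<le> ln (1 + z)" by (rule ln_lower_pade[OF z])
  finally have "exp (a * l / (p + g)) \<le> exp (ln (1 + z))" by simp
  then show ?thesis using z unfolding z_def by simp
qed

lemma neu_step:
  fixes A :: "nat set" and p a l :: "nat \<Rightarrow> real" and g :: real
  assumes A: "finite A" and p: "\<And>i. i \<in> A \<Longrightarrow> 0 < p i" and ps: "(\<Sum>i\<in>A. p i) = 1"
    and g: "0 < g" and a: "\<And>j. j \<in> A \<Longrightarrow> 0 \<le> a j \<and> a j \<le> 2 * g"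
    and l: "\<And>j. j \<in> A \<Longrightarrow> 0 \<le> l j \<and> l j \<le> 1"
  shows "(\<Sum>i\<in>A. exp (\<Sum>j\<in>A. a j * ((if j = i then l i / (p i + g) else 0) - l j)) * p i) \<le> 1"
proof -
  define M where "M = (\<Sum>j\<in>A. a j * l j)"
  have M0: "0 \<le> M" unfolding M_def using a l by (intro sum_nonneg) auto
  have "exp (\<Sum>j\<in>A. a j * ((if j = i then l i / (p i + g) else 0) - l j)) * p i \<le> (p i + a i * l i) * exp (- M)"
    if i: "i \<in> A" for i
  proof -
    define X where "X = l i / (p i + g)"
    have "(\<Sum>j\<in>A. a j * ((if j = i then l i / (p i + g) else 0) - l j))
        = (\<Sum>j\<in>A. a j * (if j = i then X else 0)) - M"
      unfolding M_def X_def by (simp add: sum_subtractf right_diff_distrib)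
    also have "(\<Sum>j\<in>A. a j * (if j = i then X else 0)) = (\<Sum>j\<in>A. if j = i then a i * X else 0)"
      by (rule sum.cong) auto
    also have "\<dots> = a i * X" using A i by simp
    also have "a i * X = a i * l i / (p i + g)" unfolding X_def by simp
    finally have e0: "(\<Sum>j\<in>A. a j * ((if j = i then l i / (p i + g) else 0) - l j)) = a i * l i / (p i + g) - M" .
    have e: "exp (\<Sum>j\<in>A. a j * ((if j = i then l i / (p i + g) else 0) - l j)) = exp (a i * l i / (p i + g)) * exp (- M)"
      unfolding e0 by (simp add: exp_add[symmetric])
    have "exp (a i * l i / (p i + g)) \<le> 1 + a i * l i / p i"
      using a[OF i] l[OF i] p[OF i] g by (intro ix_scalar) auto
    then have "exp (a i * l i / (p i + g)) * p i \<le> (1 + a i * l i / p i) * p i"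
      using p[OF i] by (intro mult_right_mono) auto
    also have "\<dots> = p i + a i * l i" using p[OF i] by (simp add: field_simps)
    finally show ?thesis unfolding e
      by (smt (verit) exp_gt_zero mult.commute mult.left_commute mult_right_mono)
  qed
  then have "(\<Sum>i\<in>A. exp (\<Sum>j\<in>A. a j * ((if j = i then l i / (p i + g) else 0) - l j)) * p i)
      \<le> (\<Sum>i\<in>A. (p i + a i * l i) * exp (- M))" by (rule sum_mono)
  also have "\<dots> = (1 + M) * exp (- M)"
    unfolding M_def by (simp add: sum_distrib_right[symmetric] sum.distrib ps)
  also have "\<dots> \<le> exp M * exp (- M)"
    using exp_ge_add_one_self[of M] by (intro mult_right_mono) auto
  also have "\<dots> = 1" by (simp add: exp_minus)
  finally show ?thesis .
qed

definition Phi :: "nat \<Rightarrow> real \<Rightarrow> (nat \<Rightarrow> real) \<Rightarrow> real" where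
  "Phi K x L = ln ((\<Sum>j<K. exp (- x * L j)) / real K) / x"

lemma Phi_zero: "K \<ge> 1 \<Longrightarrow> Phi K x (\<lambda>j. 0) = 0"
  unfolding Phi_def by simp

lemma Phi_mono:
  assumes K: "K \<ge> 1" and x': "0 < x'" and xx: "x' \<le> x"
  shows "Phi K x' L \<le> Phi K x L"
proof -
  have x: "0 < x" using x' xx by simp
  define r where "r = x' / x"
  have r0: "0 \<le> r" and r1: "r \<le> 1" unfolding r_def using x x' xx by auto
  define W where "W = (\<Sum>j<K. exp (- x * L j))"
  define m where "m = W / real K"
  have Wpos: "0 < W" unfolding W_def using K by (intro sum_pos2[where i=0]) auto
  have mpos: "0 < m" unfolding m_def using Wpos K by simp
  have each: "exp (- x' * L j) / exp (r * ln m) \<le> 1 + r * (exp (- x * L j) / m - 1)" for j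
  proof -
    have "exp (r * (- x * L j - ln m)) \<le> 1 + r * (exp (- x * L j - ln m) - 1)"
      by (rule exp_convex_bern[OF r0 r1])
    moreover have "exp (r * (- x * L j - ln m)) = exp (- x' * L j) / exp (r * ln m)"
      unfolding r_def using x by (simp add: exp_diff right_diff_distrib)
    moreover have "exp (- x * L j - ln m) = exp (- x * L j) / m"
      using mpos by (simp add: exp_diff)
    ultimately show ?thesis by simp
  qed
  have "(\<Sum>j<K. exp (- x' * L j)) / exp (r * ln m) = (\<Sum>j<K. exp (- x' * L j) / exp (r * ln m))"
    by (simp add: sum_divide_distrib)
  also have "\<dots> \<le> (\<Sum>j<K. 1 + r * (exp (- x * L j) / m - 1))"
    by (rule sum_mono) (rule each)
  also have "\<dots> = real K + r * (W / m - real K)"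
    unfolding W_def by (simp add: sum.distrib sum_distrib_left[symmetric] sum_subtractf sum_divide_distrib[symmetric])
  also have "\<dots> = real K" unfolding m_def using K Wpos by simp
  finally have "(\<Sum>j<K. exp (- x' * L j)) / real K \<le> exp (r * ln m)"
    using K by (simp add: divide_le_eq mult.commute)
  moreover have "0 < (\<Sum>j<K. exp (- x' * L j)) / real K"
    using K by (intro divide_pos_pos sum_pos2[where i=0]) auto
  ultimately have "ln ((\<Sum>j<K. exp (- x' * L j)) / real K) \<le> r * ln m"
    by (metis ln_exp ln_le_cancel_iff exp_gt_zero)
  then have "ln ((\<Sum>j<K. exp (- x' * L j)) / real K) / x' \<le> r * ln m / x'"
    using x' by (intro divide_right_mono) auto
  also have "r * ln m / x' = ln m / x" unfolding r_def using x x' by simp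
  finally show ?thesis unfolding Phi_def m_def W_def .
qed

lemma Phi_step:
  assumes K: "K \<ge> 1" and x: "0 < x" and g: "\<And>j. j < K \<Longrightarrow> 0 \<le> g j"
  shows "(\<Sum>j<K. exp (- x * L j) / (\<Sum>k<K. exp (- x * L k)) * g j)
     - x / 2 * (\<Sum>j<K. exp (- x * L j) / (\<Sum>k<K. exp (- x * L k)) * (g j)^2)
     \<le> Phi K x L - Phi K x (\<lambda>j. L j + g j)"
proof -
  define W where "W = (\<Sum>k<K. exp (- x * L k))"
  define q where "q j = exp (- x * L j) / W" for j
  have Wpos: "0 < W" unfolding W_def using K by (intro sum_pos2[where i=0]) auto
  have qpos: "0 < q j" for j unfolding q_def using Wpos by simp
  have qsum: "(\<Sum>j<K. q j) = 1" unfolding q_def W_def using Wpos[unfolded W_def]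
    by (simp add: sum_divide_distrib[symmetric])
  define Z where "Z = (\<Sum>j<K. q j * exp (- x * g j))"
  have W': "(\<Sum>j<K. exp (- x * (L j + g j))) = W * Z"
  proof -
    have "(\<Sum>j<K. exp (- x * (L j + g j))) = (\<Sum>j<K. W * (q j * exp (- x * g j)))"
      by (rule sum.cong[OF refl]) (use Wpos in \<open>simp add: q_def mult_exp_exp algebra_simps\<close>)
    also have "\<dots> = W * Z" by (simp add: Z_def sum_distrib_left)
    finally show ?thesis .
  qed
  have qe: "0 < q j * exp (- x * g j)" for j using qpos[of j] by simp
  have Zpos: "0 < Z" unfolding Z_def using K qe by (intro sum_pos2[where i=0]) (auto intro: less_imp_le)
  have "Z \<le> (\<Sum>j<K. q j * (1 - x * g j + (x * g j)^2 / 2))"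
  proof -
    have b: "exp (- x * g j) \<le> 1 - x * g j + (x * g j)^2 / 2" if "j < K" for j
      using exp_neg_quad[of "x * g j"] g[OF that] x by simp
    show ?thesis unfolding Z_def using qpos b
      by (intro sum_mono mult_left_mono) (auto intro: less_imp_le)
  qed
  also have "\<dots> = 1 - x * (\<Sum>j<K. q j * g j) + x^2 / 2 * (\<Sum>j<K. q j * (g j)^2)"
    by (simp add: qsum algebra_simps sum.distrib sum_subtractf sum_distrib_left power_mult_distrib)
  finally have Zle: "Z \<le> 1 - x * (\<Sum>j<K. q j * g j) + x^2 / 2 * (\<Sum>j<K. q j * (g j)^2)" .
  have "Phi K x (\<lambda>j. L j + g j) - Phi K x L = ln Z / x"
  proof -
    have "Phi K x (\<lambda>j. L j + g j) = ln (W * Z / real K) / x"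
      unfolding Phi_def W' by simp
    also have "\<dots> = (ln (W / real K) + ln Z) / x"
    proof -
      have "W * Z / real K = (W / real K) * Z" by simp
      moreover have "ln ((W / real K) * Z) = ln (W / real K) + ln Z"
        using Wpos Zpos K by (intro ln_mult_pos) auto
      ultimately show ?thesis by simp
    qed
    finally show ?thesis unfolding Phi_def W_def[symmetric] by (simp add: add_divide_distrib)
  qed
  also have "ln Z / x \<le> (Z - 1) / x"
    using ln_le_minus_one[OF Zpos] x by (intro divide_right_mono) auto
  also have "(Z - 1) / x \<le> (- x * (\<Sum>j<K. q j * g j) + x^2 / 2 * (\<Sum>j<K. q j * (g j)^2)) / x"
    using Zle x by (intro divide_right_mono) auto
  also have "\<dots> = - (\<Sum>j<K. q j * g j) + x / 2 * (\<Sum>j<K. q j * (g j)^2)"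
    using x by (simp add: field_simps power2_eq_square)
  finally show ?thesis unfolding q_def W_def by simp
qed

lemma Phi_lower:
  assumes K: "K \<ge> 1" and x: "0 < x" and a: "a < K"
  shows "- Phi K x L \<le> L a + ln (real K) / x"
proof -
  have "exp (- x * L a) \<le> (\<Sum>j<K. exp (- x * L j))"
    using a by (intro member_le_sum) auto
  then have "ln (exp (- x * L a)) \<le> ln (\<Sum>j<K. exp (- x * L j))"
    using a by (subst ln_le_cancel_iff) (auto intro!: sum_pos2[where i=a])
  moreover have pos: "0 < (\<Sum>j<K. exp (- x * L j))" using a by (intro sum_pos2[where i=a]) auto
  ultimately have "- x * L a - ln (real K) \<le> ln ((\<Sum>j<K. exp (- x * L j)) / real K)"
    using K a by (subst ln_div) auto
  then have "(- x * L a - ln (real K)) / x \<le> Phi K x L"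
    unfolding Phi_def using x by (intro divide_right_mono) auto
  moreover have "(- x * L a - ln (real K)) / x = - L a - ln (real K) / x"
    using x by (simp add: field_simps)
  ultimately show ?thesis by simp
qed

lemma ftrl:
  fixes K n :: nat and e :: "nat \<Rightarrow> real" and g Lc :: "nat \<Rightarrow> nat \<Rightarrow> real"
  assumes K: "K \<ge> 1" and e_pos: "\<And>s. 0 < e s" and e_mono: "\<And>s s'. s \<le> s' \<Longrightarrow> e s' \<le> e s"
    and g: "\<And>s j. s < n \<Longrightarrow> j < K \<Longrightarrow> 0 \<le> g s j"
    and Lc0: "\<And>j. Lc 0 j = 0" and LcS: "\<And>s j. s < n \<Longrightarrow> Lc (Suc s) j = Lc s j + g s j"
  shows "(\<Sum>s<n. (\<Sum>j<K. exp (- e s * Lc s j) / (\<Sum>k<K. exp (- e s * Lc s k)) * g s j)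
     - e s / 2 * (\<Sum>j<K. exp (- e s * Lc s j) / (\<Sum>k<K. exp (- e s * Lc s k)) * (g s j)^2))
     \<le> - Phi K (e (n - 1)) (Lc n)"
proof -
  have "m \<le> n \<Longrightarrow> (\<Sum>s<m. (\<Sum>j<K. exp (- e s * Lc s j) / (\<Sum>k<K. exp (- e s * Lc s k)) * g s j)
     - e s / 2 * (\<Sum>j<K. exp (- e s * Lc s j) / (\<Sum>k<K. exp (- e s * Lc s k)) * (g s j)^2))
     \<le> - Phi K (e (m - 1)) (Lc m)" for m
  proof (induction m)
    case 0
    have "Lc 0 = (\<lambda>j. 0)" using Lc0 by auto
    then show ?case using Phi_zero[OF K] by simp
  next
    case (Suc m)
    then have mn: "m < n" by simp
    have "Lc (Suc m) = (\<lambda>j. Lc m j + g m j)" using LcS[OF mn] by auto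
    then have st: "(\<Sum>j<K. exp (- e m * Lc m j) / (\<Sum>k<K. exp (- e m * Lc m k)) * g m j)
       - e m / 2 * (\<Sum>j<K. exp (- e m * Lc m j) / (\<Sum>k<K. exp (- e m * Lc m k)) * (g m j)^2)
       \<le> Phi K (e m) (Lc m) - Phi K (e m) (Lc (Suc m))"
    proof -
      have gn: "\<And>j. j < K \<Longrightarrow> 0 \<le> g m j" using g[OF mn] by blast
      show ?thesis using Phi_step[OF K e_pos[of m] gn, where L = "Lc m"] \<open>Lc (Suc m) = _\<close> by simp
    qed
    have mo: "Phi K (e m) (Lc m) \<le> Phi K (e (m - 1)) (Lc m)"
      using Phi_mono[OF K e_pos e_mono] by simp
    show ?case using Suc.IH Suc.prems st mo by simp
  qed
  then show ?thesis by simp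
qed

locale ftarl =
  fixes K :: nat and eta gamma :: "nat \<Rightarrow> real"
    and Act :: "nat \<Rightarrow> nat list \<Rightarrow> nat set"
    and ell :: "nat \<Rightarrow> nat list \<Rightarrow> nat \<Rightarrow> real"
  assumes K: "K \<ge> 2"
    and eta_pos: "\<And>t. t \<ge> 1 \<Longrightarrow> eta t > 0"
    and gamma_pos: "\<And>t. t \<ge> 1 \<Longrightarrow> gamma t > 0"
    and Act_sub: "\<And>t h. t \<ge> 1 \<Longrightarrow> Act t h \<subseteq> {..<K}"
    and Act_ne: "\<And>t h. t \<ge> 1 \<Longrightarrow> Act t h \<noteq> {}"
    and ell_range: "\<And>t h i. t \<ge> 1 \<Longrightarrow> i < K \<Longrightarrow> 0 \<le> ell t h i \<and> ell t h i \<le> 1"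
begin

lemma qsum_pos: "0 < (\<Sum>j<K. exp (- (e::real) * (L::nat\<Rightarrow>real) j))"
proof -
  have "0 \<in> {..<K}" using K by simp
  then show ?thesis by (intro sum_pos2[where i=0]) auto
qed

lemma qprob_pos: "0 < qprob K eta t L i"
  unfolding qprob_def by (rule divide_pos_pos[OF exp_gt_zero qsum_pos])

lemma qprob_sum: "(\<Sum>i<K. qprob K eta t L i) = 1"
  unfolding qprob_def using qsum_pos[of "eta t" L] by (simp add: sum_divide_distrib[symmetric])

lemma fin_Act: "t \<ge> 1 \<Longrightarrow> finite (Act t h)"
  using Act_sub finite_subset by blast

lemma qA_pos: "finite A \<Longrightarrow> A \<noteq> {} \<Longrightarrow> 0 < (\<Sum>j\<in>A. qprob K eta t L j)"
proof -
  assume "finite A" "A \<noteq> {}"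
  then obtain a where "a \<in> A" by blast
  then show ?thesis using \<open>finite A\<close> by (intro sum_pos2[where i=a] less_imp_le qprob_pos) auto
qed

lemma pprob_pos: "finite A \<Longrightarrow> i \<in> A \<Longrightarrow> 0 < pprob K eta A t L i"
proof -
  assume f: "finite A" and i: "i \<in> A"
  then have "A \<noteq> {}" by blast
  then show ?thesis unfolding pprob_def using i by (auto intro!: divide_pos_pos qprob_pos qA_pos f)
qed

lemma pprob_nonneg: "finite A \<Longrightarrow> 0 \<le> pprob K eta A t L i"
proof -
  assume f: "finite A"
  have "0 \<le> (if i \<in> A then qprob K eta t L i else 0)" using qprob_pos[of t L i] by simp
  moreover have "0 \<le> (\<Sum>j\<in>A. qprob K eta t L j)" using qprob_pos by (intro sum_nonneg less_imp_le)
  ultimately show ?thesis unfolding pprob_def by (rule divide_nonneg_nonneg)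
qed

lemma pprob_out: "i \<notin> A \<Longrightarrow> pprob K eta A t L i = 0"
  unfolding pprob_def by simp

lemma pprob_sum: "finite A \<Longrightarrow> A \<noteq> {} \<Longrightarrow> (\<Sum>i\<in>A. pprob K eta A t L i) = 1"
  unfolding pprob_def using qA_pos[of A t L]
  by (simp add: sum_divide_distrib[symmetric])

lemma pprob_le1: "finite A \<Longrightarrow> pprob K eta A t L i \<le> 1"
proof (cases "i \<in> A")
  case True
  assume f: "finite A"
  have "pprob K eta A t L i \<le> (\<Sum>i\<in>A. pprob K eta A t L i)"
    using f True by (intro member_le_sum pprob_nonneg) auto
  moreover have "A \<noteq> {}" using True by blast
  ultimately show ?thesis using pprob_sum[OF f] by simp
qed (simp add: pprob_out)

abbreviation "pf s h \<equiv> pprob K eta (Act (Suc s) h) (Suc s) (Lcum K eta gamma Act ell s h)"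

lemma pmf_pdist: "pmf (pdist K eta gamma Act ell s h) i = pf s h i"
proof -
  have f: "finite (Act (Suc s) h)" and ne: "Act (Suc s) h \<noteq> {}" using fin_Act Act_ne by auto
  have nn: "\<And>x. 0 \<le> pf s h x" using pprob_nonneg[OF f] by auto
  have "(\<integral>\<^sup>+x. ennreal (pf s h x) \<partial>count_space UNIV) = (\<Sum>x\<in>Act (Suc s) h. ennreal (pf s h x))"
    using f by (intro nn_integral_count_space') (auto simp: pprob_out)
  also have "\<dots> = ennreal (\<Sum>x\<in>Act (Suc s) h. pf s h x)"
    using nn by (simp add: sum_ennreal)
  also have "\<dots> = 1" using pprob_sum[OF f ne] by simp
  finally have pr: "(\<integral>\<^sup>+x. ennreal (pf s h x) \<partial>count_space UNIV) = 1" .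
  show ?thesis unfolding pdist_def by (rule pmf_embed_pmf[of "pf s h", OF nn pr])
qed

lemma set_pdist: "set_pmf (pdist K eta gamma Act ell s h) \<subseteq> Act (Suc s) h"
proof
  fix x assume "x \<in> set_pmf (pdist K eta gamma Act ell s h)"
  then have "pf s h x \<noteq> 0" by (simp add: set_pmf_iff pmf_pdist)
  then show "x \<in> Act (Suc s) h" using pprob_out by metis
qed

lemma exp_pdist:
  "measure_pmf.expectation (pdist K eta gamma Act ell s h) f = (\<Sum>i\<in>Act (Suc s) h. f i * pf s h i)"
proof -
  have f: "finite (Act (Suc s) h)" using fin_Act by simp
  have "measure_pmf.expectation (pdist K eta gamma Act ell s h) f = (\<Sum>i\<in>Act (Suc s) h. f i * pmf (pdist K eta gamma Act ell s h) i)"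
    by (rule integral_measure_pmf_real[OF f]) (use set_pdist in blast)
  then show ?thesis by (simp add: pmf_pdist)
qed

lemma play_support:
  "hs \<in> set_pmf (play K eta gamma Act ell n) \<Longrightarrow> length hs = n \<and> (\<forall>s<n. hs ! s \<in> Act (Suc s) (take s hs))"
proof (induction n arbitrary: hs)
  case 0 then show ?case by simp
next
  case (Suc n)
  from Suc.prems obtain h where h: "h \<in> set_pmf (play K eta gamma Act ell n)" 
     and "hs \<in> (\<lambda>i. h @ [i]) ` set_pmf (pdist K eta gamma Act ell n h)" by auto
  then obtain i where i0: "i \<in> set_pmf (pdist K eta gamma Act ell n h)" and hs: "hs = h @ [i]" by blast
  have i: "i \<in> Act (Suc n) h" using i0 set_pdist by blast
  from Suc.IH[OF h] have "length h = n" "\<forall>s<n. h ! s \<in> Act (Suc s) (take s h)" by auto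
  then have len: "length hs = Suc n" and pre: "\<forall>s<n. h ! s \<in> Act (Suc s) (take s h)" using hs by auto
  have "hs ! s \<in> Act (Suc s) (take s hs)" if s: "s < Suc n" for s
  proof (cases "s < n")
    case True
    then have "hs ! s = h ! s" "take s hs = take s h" using hs \<open>length h = n\<close> by (simp_all add: nth_append)
    then show ?thesis using pre True by simp
  next
    case False
    then have "s = n" using s by simp
    then show ?thesis using hs i \<open>length h = n\<close> by (simp add: nth_append)
  qed
  then show ?case using len by blast
qed

lemma finite_play: "finite (set_pmf (play K eta gamma Act ell n))"
proof (induction n)
  case 0 then show ?case by simp
next
  case (Suc n)
  have "finite (set_pmf (pdist K eta gamma Act ell n h))" for h
    by (rule finite_subset[OF set_pdist]) (simp add: fin_Act)
  then show ?case using Suc by simp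
qed

end

context ftarl begin

lemma nth_prefix: "take (Suc s) hs = take (Suc s) hs' \<Longrightarrow> hs ! s = hs' ! s"
  by (metis lessI nth_take)

lemma take_prefix: "take (Suc s) hs = take (Suc s) hs' \<Longrightarrow> s' \<le> s \<Longrightarrow> take s' hs = take s' hs'"
  by (metis le_imp_less_Suc min.strict_order_iff take_take)

lemma Lcum_prefix: "take s hs = take s hs' \<Longrightarrow> Lcum K eta gamma Act ell s hs = Lcum K eta gamma Act ell s hs'"
proof (induction s)
  case 0 show ?case by simp
next
  case (Suc s)
  have t: "take s hs = take s hs'" using take_prefix[OF Suc.prems, of s] by simp
  have n: "hs ! s = hs' ! s" using nth_prefix[OF Suc.prems] .
  show ?case using Suc.IH[OF t] t n by (simp add: Let_def)
qed

lemma expmoment: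
  fixes Y :: "nat \<Rightarrow> nat list \<Rightarrow> real"
  shows "(\<And>s hs hs'. s < n \<Longrightarrow> take (Suc s) hs = take (Suc s) hs' \<Longrightarrow> Y s hs = Y s hs') \<Longrightarrow>
   (\<And>s h. s < n \<Longrightarrow> length h = s \<Longrightarrow> (\<Sum>i\<in>Act (Suc s) h. exp (Y s (h @ [i])) * pf s h i) \<le> 1) \<Longrightarrow>
   measure_pmf.expectation (play K eta gamma Act ell n) (\<lambda>hs. exp (\<Sum>s<n. Y s hs)) \<le> 1"
proof (induction n)
  case 0
  then show ?case by simp
next
  case (Suc n)
  let ?P = "play K eta gamma Act ell n"
  let ?S = "\<lambda>hs. exp (\<Sum>s<n. Y s hs)"
  have IH: "measure_pmf.expectation ?P ?S \<le> 1"
  proof (rule Suc.IH)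
    fix s and hs hs' :: "nat list" assume "s < n" "take (Suc s) hs = take (Suc s) hs'"
    then show "Y s hs = Y s hs'" by (intro Suc.prems(1)) auto
  next
    fix s and h :: "nat list" assume "s < n" "length h = s"
    then show "(\<Sum>i\<in>Act (Suc s) h. exp (Y s (h @ [i])) * pf s h i) \<le> 1" by (intro Suc.prems(2)) auto
  qed
  have fin: "finite (set_pmf ?P)" by (rule finite_play)
  have fin2: "finite (set_pmf (map_pmf (\<lambda>i. h @ [i]) (pdist K eta gamma Act ell n h)))" for h
    unfolding set_map_pmf by (rule finite_imageI, rule finite_subset[OF set_pdist]) (simp add: fin_Act)
  have "measure_pmf.expectation (play K eta gamma Act ell (Suc n)) (\<lambda>hs. exp (\<Sum>s<Suc n. Y s hs))
      = (\<Sum>h\<in>set_pmf ?P. pmf ?P h *\<^sub>R measure_pmf.expectation (map_pmf (\<lambda>i. h @ [i]) (pdist K eta gamma Act ell n h)) (\<lambda>hs. exp (\<Sum>s<Suc n. Y s hs)))"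
    unfolding play.simps by (rule pmf_expectation_bind[OF fin fin2]) simp
  also have "\<dots> = (\<Sum>h\<in>set_pmf ?P. pmf ?P h * (\<Sum>i\<in>Act (Suc n) h. exp (\<Sum>s<Suc n. Y s (h @ [i])) * pf n h i))"
    by (simp add: exp_pdist)
  also have "\<dots> \<le> (\<Sum>h\<in>set_pmf ?P. pmf ?P h * ?S h)"
  proof (rule sum_mono)
    fix h assume h: "h \<in> set_pmf ?P"
    then have len: "length h = n" using play_support by blast
    have eq: "(\<Sum>s<Suc n. Y s (h @ [i])) = (\<Sum>s<n. Y s h) + Y n (h @ [i])" for i
    proof -
      have "Y s (h @ [i]) = Y s h" if "s < n" for s
        using that len by (intro Suc.prems(1)) auto
      then show ?thesis by simp
    qed
    have "(\<Sum>i\<in>Act (Suc n) h. exp (\<Sum>s<Suc n. Y s (h @ [i])) * pf n h i)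
        = ?S h * (\<Sum>i\<in>Act (Suc n) h. exp (Y n (h @ [i])) * pf n h i)"
      unfolding eq exp_add sum_distrib_left by (rule sum.cong[OF refl]) simp
    also have "\<dots> \<le> ?S h * 1"
      using Suc.prems(2)[of n h] len by (intro mult_left_mono) auto
    finally show "pmf ?P h * (\<Sum>i\<in>Act (Suc n) h. exp (\<Sum>s<Suc n. Y s (h @ [i])) * pf n h i) \<le> pmf ?P h * ?S h"
      by (intro mult_left_mono) auto
  qed
  also have "\<dots> = measure_pmf.expectation ?P ?S"
    by (subst integral_measure_pmf_real[OF fin]) (auto simp: mult_ac)
  finally show ?case using IH by linarith
qed

end

context ftarl begin

lemma round:
  fixes A :: "nat set" and i t :: nat and L l :: "nat \<Rightarrow> real"
  assumes A: "A \<subseteq> {..<K}" "A \<noteq> {}" and i: "i \<in> A" and t: "t \<ge> 1"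
    and l: "0 \<le> l i" "l i \<le> 1"
  defines "u \<equiv> l i / (pprob K eta A t L i + gamma t)"
    and "c \<equiv> l i * pprob K eta A t L i / (pprob K eta A t L i + gamma t)"
  shows est_in: "\<And>j. j \<in> A \<Longrightarrow> est K eta gamma A t L l i j = (if j = i then u else 0)"
    and est_sum: "(\<Sum>j\<in>A. est K eta gamma A t L l i j) = u"
    and est_out: "\<And>j. j \<notin> A \<Longrightarrow> est K eta gamma A t L l i j = c"
    and est_lc: "l i - c = gamma t * u"
    and est_nn: "\<And>j. 0 \<le> est K eta gamma A t L l i j"
    and est_u: "0 \<le> u"
    and est_q: "(\<Sum>j<K. qprob K eta t L j * est K eta gamma A t L l i j) = c"
    and est_q2: "(\<Sum>j<K. qprob K eta t L j * (est K eta gamma A t L l i j)^2) \<le> u"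
proof -
  have fA: "finite A" using A finite_subset by blast
  define p where "p = pprob K eta A t L i"
  define g where "g = gamma t"
  have p0: "0 < p" unfolding p_def using pprob_pos[OF fA i] .
  have p1: "p \<le> 1" unfolding p_def using pprob_le1[OF fA] .
  have g0: "0 < g" unfolding g_def using gamma_pos t by simp
  have u: "u = l i / (p + g)" unfolding u_def p_def g_def ..
  have c: "c = p * u" unfolding c_def u p_def g_def by simp
  have u0: "0 \<le> u" unfolding u using l p0 g0 by simp
  have c1: "c \<le> 1"
  proof -
    have "p / (p + g) \<le> 1" using p0 g0 by simp
    moreover have "c = l i * (p / (p + g))" unfolding c u by simp
    ultimately show ?thesis using l by (metis mult_le_one divide_nonneg_nonneg less_imp_le add_pos_pos p0 g0)
  qed
  have c0: "0 \<le> c" unfolding c using p0 u0 by simp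
  show ein: "est K eta gamma A t L l i j = (if j = i then u else 0)" if "j \<in> A" for j
    using that unfolding est_def Let_def u_def by simp
  have es: "(\<Sum>j\<in>A. est K eta gamma A t L l i j) = u"
  proof -
    have "(\<Sum>j\<in>A. est K eta gamma A t L l i j) = (\<Sum>j\<in>A. if j = i then u else 0)"
      by (rule sum.cong) (auto simp: ein)
    also have "\<dots> = u" using fA i by simp
    finally show ?thesis .
  qed
  then show "(\<Sum>j\<in>A. est K eta gamma A t L l i j) = u" .
  have lc: "l i - c = g * u" unfolding c u using p0 g0 by (simp add: field_simps)
  then show "l i - c = gamma t * u" unfolding g_def .
  have eout: "est K eta gamma A t L l i j = c" if "j \<notin> A" for j
  proof -
    have "(\<Sum>k\<in>A. if k = i then l i / (pprob K eta A t L k + gamma t) else 0) = u"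
      using fA i unfolding u_def by simp
    then have "est K eta gamma A t L l i j = l i - g * u"
      using that unfolding est_def Let_def g_def by simp
    then show ?thesis using lc by simp
  qed
  then show "\<And>j. j \<notin> A \<Longrightarrow> est K eta gamma A t L l i j = c" by blast
  show "\<And>j. 0 \<le> est K eta gamma A t L l i j"
    using ein eout u0 c0 by (metis order_refl)
  show "0 \<le> u" by (rule u0)
  define Q where "Q = (\<Sum>j\<in>A. qprob K eta t L j)"
  have Q0: "0 < Q" unfolding Q_def using qA_pos[OF fA A(2)] .
  have QK: "(\<Sum>j\<in>{..<K} - A. qprob K eta t L j) = 1 - Q"
    unfolding Q_def using qprob_sum[of t L] sum.subset_diff[OF A(1), of "qprob K eta t L"] by simp
  have Q1: "Q \<le> 1" using QK qprob_pos by (smt (verit) sum_nonneg)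
  have qi: "qprob K eta t L i = p * Q" unfolding p_def pprob_def Q_def using i Q0[unfolded Q_def] by simp
  have split: "(\<Sum>j<K. f j) = (\<Sum>j\<in>{..<K} - A. f j) + (\<Sum>j\<in>A. f j)" for f :: "nat \<Rightarrow> real"
    using sum.subset_diff[OF A(1)] by simp
  have inA: "(\<Sum>j\<in>A. qprob K eta t L j * f (est K eta gamma A t L l i j)) = p * Q * f u + (Q - p * Q) * f 0"
    for f :: "real \<Rightarrow> real"
  proof -
    have "(\<Sum>j\<in>A. qprob K eta t L j * f (est K eta gamma A t L l i j))
        = (\<Sum>j\<in>A. qprob K eta t L j * f 0 + (if j = i then qprob K eta t L i * (f u - f 0) else 0))"
      by (rule sum.cong) (auto simp: ein algebra_simps)
    also have "\<dots> = Q * f 0 + qprob K eta t L i * (f u - f 0)"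
      using fA i unfolding Q_def by (simp add: sum.distrib sum_distrib_right)
    finally show ?thesis unfolding qi by (simp add: algebra_simps)
  qed
  have outA: "(\<Sum>j\<in>{..<K} - A. qprob K eta t L j * f (est K eta gamma A t L l i j)) = (1 - Q) * f c"
    for f :: "real \<Rightarrow> real"
  proof -
    have "(\<Sum>j\<in>{..<K} - A. qprob K eta t L j * f (est K eta gamma A t L l i j))
        = (\<Sum>j\<in>{..<K} - A. qprob K eta t L j * f c)"
      by (rule sum.cong) (auto simp: eout)
    also have "\<dots> = (1 - Q) * f c" unfolding sum_distrib_right[symmetric] QK ..
    finally show ?thesis .
  qed
  show "(\<Sum>j<K. qprob K eta t L j * est K eta gamma A t L l i j) = c"
    using split[of "\<lambda>j. qprob K eta t L j * est K eta gamma A t L l i j"]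
      inA[of "\<lambda>x. x"] outA[of "\<lambda>x. x"] c by (simp add: algebra_simps)
  have "(\<Sum>j<K. qprob K eta t L j * (est K eta gamma A t L l i j)^2) = p * Q * u^2 + (1 - Q) * c^2"
    using split[of "\<lambda>j. qprob K eta t L j * (est K eta gamma A t L l i j)^2"]
      inA[of "\<lambda>x. x^2"] outA[of "\<lambda>x. x^2"] by simp
  also have "\<dots> = p * u^2 * (Q + (1 - Q) * p)" unfolding c by (simp add: algebra_simps power2_eq_square)
  also have "\<dots> \<le> p * u^2 * 1"
  proof (rule mult_left_mono)
    have "(1 - Q) * p \<le> (1 - Q) * 1" using Q1 p1 by (intro mult_left_mono) auto
    then show "Q + (1 - Q) * p \<le> 1" by simp
    show "0 \<le> p * u^2" using p0 by simp
  qed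
  also have "\<dots> = c * u" unfolding c by (simp add: power2_eq_square)
  also have "\<dots> \<le> 1 * u" using c1 u0 by (intro mult_right_mono) auto
  finally show "(\<Sum>j<K. qprob K eta t L j * (est K eta gamma A t L l i j)^2) \<le> u" by simp
qed


definition "AA s hs = Act (Suc s) (take s hs)"
definition "LL s hs = Lcum K eta gamma Act ell s hs"
definition "ls s hs = ell (Suc s) (take s hs)"
definition "gg s hs j = est K eta gamma (AA s hs) (Suc s) (LL s hs) (ls s hs) (hs ! s) j"
definition "qq s hs j = qprob K eta (Suc s) (LL s hs) j"

lemma conc:
  fixes al :: "nat \<Rightarrow> nat list \<Rightarrow> nat \<Rightarrow> real"
  assumes pre: "\<And>s hs hs'. take s hs = take s hs' \<Longrightarrow> al s hs = al s hs'"
   and bnd: "\<And>s hs j. s < n \<Longrightarrow> j \<in> AA s hs \<Longrightarrow> 0 \<le> al s hs j \<and> al s hs j \<le> 2 * gamma (Suc s)"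
  shows "measure_pmf.expectation (play K eta gamma Act ell n)
     (\<lambda>hs. exp (\<Sum>s<n. \<Sum>j\<in>AA s hs. al s hs j * (gg s hs j - ls s hs j))) \<le> 1"
proof (rule expmoment)
  fix s and hs hs' :: "nat list" assume "s < n" and tk: "take (Suc s) hs = take (Suc s) hs'"
  have t: "take s hs = take s hs'" using take_prefix[OF tk, of s] by simp
  have 1: "AA s hs = AA s hs'" "ls s hs = ls s hs'" "LL s hs = LL s hs'"
    using t Lcum_prefix[OF t] by (simp_all add: AA_def ls_def LL_def)
  have 2: "gg s hs j = gg s hs' j" for j
    unfolding gg_def 1 using nth_prefix[OF tk] by simp
  have 3: "al s hs = al s hs'" using pre[OF t] .
  show "(\<Sum>j\<in>AA s hs. al s hs j * (gg s hs j - ls s hs j)) = (\<Sum>j\<in>AA s hs'. al s hs' j * (gg s hs' j - ls s hs' j))"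
    unfolding 1 2 3 ..
next
  fix s and h :: "nat list" assume s: "s < n" and len: "length h = s"
  let ?A = "Act (Suc s) h"
  have fA: "finite ?A" using fin_Act by simp
  have tk: "take s (h @ [i]) = h" for i using len by simp
  have th: "take s h = h" using len by simp
  have nth: "(h @ [i]) ! s = i" for i using len[symmetric] by simp
  have Y: "(\<Sum>j\<in>AA s (h @ [i]). al s (h @ [i]) j * (gg s (h @ [i]) j - ls s (h @ [i]) j))
     = (\<Sum>j\<in>?A. al s h j * ((if j = i then ell (Suc s) h i / (pf s h i + gamma (Suc s)) else 0) - ell (Suc s) h j))" for i
  proof -
    have L: "LL s (h @ [i]) = Lcum K eta gamma Act ell s h"
      unfolding LL_def using Lcum_prefix[of s "h @ [i]" h] tk th by simp
    have a: "al s (h @ [i]) = al s h" using pre[of s "h @ [i]" h] tk th by simp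
    show ?thesis unfolding AA_def ls_def gg_def tk nth L a
      by (rule sum.cong[OF refl]) (simp add: est_def Let_def AA_def tk cong: if_cong)
  qed
  show "(\<Sum>i\<in>?A. exp (\<Sum>j\<in>AA s (h @ [i]). al s (h @ [i]) j * (gg s (h @ [i]) j - ls s (h @ [i]) j)) * pf s h i) \<le> 1"
    unfolding Y
  proof (rule neu_step[OF fA])
    show "\<And>i. i \<in> ?A \<Longrightarrow> 0 < pf s h i" using pprob_pos[OF fA] by blast
    show "(\<Sum>i\<in>?A. pf s h i) = 1" using pprob_sum[OF fA] Act_ne by simp
    show "0 < gamma (Suc s)" using gamma_pos by simp
    show "\<And>j. j \<in> ?A \<Longrightarrow> 0 \<le> al s h j \<and> al s h j \<le> 2 * gamma (Suc s)"
      using bnd[OF s, of _ h] th unfolding AA_def by simp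
    fix j assume "j \<in> ?A"
    then have "j < K" using Act_sub[of "Suc s" h] by auto
    then show "0 \<le> ell (Suc s) h j \<and> ell (Suc s) h j \<le> 1" using ell_range by simp
  qed
qed

end

context ftarl begin

lemma LL_sum: "LL n hs j = (\<Sum>s<n. gg s hs j)"
  by (induction n) (simp_all add: LL_def gg_def AA_def ls_def Let_def)

lemma det_bound:
  assumes T: "T \<ge> 1"
    and eta_mono: "\<And>s t. 1 \<le> s \<Longrightarrow> s \<le> t \<Longrightarrow> eta t \<le> eta s"
    and hs: "hs \<in> set_pmf (play K eta gamma Act ell T)"
    and a: "a < K"
    and g0: "(\<Sum>s<T. \<Sum>j\<in>AA s hs. (eta (Suc s) / 2 + gamma (Suc s)) * (gg s hs j - ls s hs j)) \<le> B0"
    and ga: "(\<Sum>s<T. \<Sum>j\<in>AA s hs. (if j = a then 2 * gamma T else 0) * (gg s hs j - ls s hs j)) \<le> Ba"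
  shows "regret Act ell T hs a \<le> ln (real K) / eta T + Ba / (2 * gamma T) + B0
           + (\<Sum>s<T. (eta (Suc s) / 2 + gamma (Suc s)) * real (card (AA s hs)))"
proof -
  have sup: "\<And>s. s < T \<Longrightarrow> hs ! s \<in> AA s hs" using play_support[OF hs] unfolding AA_def by blast
  define u where "u s = (\<Sum>j\<in>AA s hs. gg s hs j)" for s
  define c where "c s = (\<Sum>j<K. qq s hs j * gg s hs j)" for s
  define I where "I s = (if a \<in> AA s hs then 1 else 0 :: real)" for s
  have Asub: "AA s hs \<subseteq> {..<K}" and Ane: "AA s hs \<noteq> {}" and fA: "finite (AA s hs)" for s
    unfolding AA_def using Act_sub Act_ne fin_Act by auto
  have R: "ls s hs (hs ! s) - c s = gamma (Suc s) * u s \<and> (a \<notin> AA s hs \<longrightarrow> gg s hs a = c s)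
     \<and> (\<Sum>j<K. qq s hs j * (gg s hs j)^2) \<le> u s \<and> (\<forall>j. 0 \<le> gg s hs j) \<and> 0 \<le> u s" if s: "s < T" for s
  proof -
    have i: "hs ! s \<in> AA s hs" using sup[OF s] .
    have ik: "hs ! s < K" using i Asub by blast
    have l: "0 \<le> ls s hs (hs ! s)" "ls s hs (hs ! s) \<le> 1" unfolding ls_def using ell_range[OF _ ik] by auto
    have t1: "1 \<le> Suc s" by simp
    note r = round[where A="AA s hs" and i="hs ! s" and t="Suc s" and L="LL s hs" and l="ls s hs", OF Asub Ane i t1 l]
    have us: "u s = ls s hs (hs ! s) / (pprob K eta (AA s hs) (Suc s) (LL s hs) (hs ! s) + gamma (Suc s))"
      unfolding u_def gg_def using r(2) .
    show ?thesis unfolding c_def qq_def gg_def us using r(3-8) by simp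
  qed
  have reg: "regret Act ell T hs a = (\<Sum>s<T. I s * (ls s hs (hs ! s) - ls s hs a))"
    unfolding regret_def I_def AA_def ls_def by (simp add: sum.atLeast1_atMost_eq)
  have step: "I s * (ls s hs (hs ! s) - ls s hs a) \<le> gamma (Suc s) * u s + (c s - gg s hs a) + I s * (gg s hs a - ls s hs a)"
    if s: "s < T" for s
  proof (cases "a \<in> AA s hs")
    case True then show ?thesis using R[OF s] unfolding I_def by simp
  next
    case False
    moreover have "0 \<le> gamma (Suc s) * u s" using R[OF s] gamma_pos[of "Suc s"] by simp
    ultimately show ?thesis using R[OF s] unfolding I_def by simp
  qed
  have reg1: "regret Act ell T hs a \<le> (\<Sum>s<T. gamma (Suc s) * u s) + (\<Sum>s<T. c s - gg s hs a) + (\<Sum>s<T. I s * (gg s hs a - ls s hs a))"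
    unfolding reg sum.distrib[symmetric] by (rule sum_mono) (rule step, simp)
  have ft: "(\<Sum>s<T. c s - eta (Suc s) / 2 * (\<Sum>j<K. qq s hs j * (gg s hs j)^2)) \<le> - Phi K (eta (Suc (T - 1))) (LL T hs)"
  proof -
    have K1: "K \<ge> 1" using K by simp
    have "(\<Sum>s<T. (\<Sum>j<K. exp (- eta (Suc s) * LL s hs j) / (\<Sum>k<K. exp (- eta (Suc s) * LL s hs k)) * gg s hs j)
     - eta (Suc s) / 2 * (\<Sum>j<K. exp (- eta (Suc s) * LL s hs j) / (\<Sum>k<K. exp (- eta (Suc s) * LL s hs k)) * (gg s hs j)^2))
     \<le> - Phi K (eta (Suc (T - 1))) (LL T hs)"
    proof (rule ftrl[OF K1, where e = "\<lambda>s. eta (Suc s)" and g = "\<lambda>s j. gg s hs j" and Lc = "\<lambda>s j. LL s hs j" and n = T])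
      show "\<And>s. 0 < eta (Suc s)" using eta_pos by simp
      show "\<And>s s'. s \<le> s' \<Longrightarrow> eta (Suc s') \<le> eta (Suc s)" using eta_mono by simp
      show "\<And>s j. s < T \<Longrightarrow> j < K \<Longrightarrow> 0 \<le> gg s hs j" using R by blast
      show "\<And>j. LL 0 hs j = 0" by (simp add: LL_def)
      show "\<And>s j. s < T \<Longrightarrow> LL (Suc s) hs j = LL s hs j + gg s hs j" by (simp add: LL_sum)
    qed
    then show ?thesis unfolding c_def qq_def qprob_def by simp
  qed
  have T1: "Suc (T - 1) = T" using T by simp
  have pl: "- Phi K (eta T) (LL T hs) \<le> LL T hs a + ln (real K) / eta T"
    using Phi_lower[of K "eta T" a] K a eta_pos[of T] T by simp
  have ft2: "(\<Sum>s<T. c s - gg s hs a) \<le> ln (real K) / eta T + (\<Sum>s<T. eta (Suc s) / 2 * u s)"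
  proof -
    have "(\<Sum>s<T. eta (Suc s) / 2 * (\<Sum>j<K. qq s hs j * (gg s hs j)^2)) \<le> (\<Sum>s<T. eta (Suc s) / 2 * u s)"
      using R eta_pos by (intro sum_mono mult_left_mono) (auto intro: less_imp_le)
    moreover have "(\<Sum>s<T. c s - gg s hs a) = (\<Sum>s<T. c s - eta (Suc s) / 2 * (\<Sum>j<K. qq s hs j * (gg s hs j)^2))
        + (\<Sum>s<T. eta (Suc s) / 2 * (\<Sum>j<K. qq s hs j * (gg s hs j)^2)) - LL T hs a"
      by (simp add: LL_sum sum_subtractf)
    ultimately show ?thesis using ft pl unfolding T1 by linarith
  qed
  have gT: "0 < gamma T" using gamma_pos T by simp
  have ia: "(\<Sum>j\<in>AA s hs. (if j = a then 2 * gamma T else 0) * (gg s hs j - ls s hs j)) = 2 * gamma T * (I s * (gg s hs a - ls s hs a))" for s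
  proof -
    have "(\<Sum>j\<in>AA s hs. (if j = a then 2 * gamma T else 0) * (gg s hs j - ls s hs j))
       = (\<Sum>j\<in>AA s hs. if j = a then 2 * gamma T * (gg s hs a - ls s hs a) else 0)"
      by (rule sum.cong) auto
    also have "\<dots> = 2 * gamma T * (I s * (gg s hs a - ls s hs a))" using fA[of s] unfolding I_def by simp
    finally show ?thesis .
  qed
  have ix: "(\<Sum>s<T. I s * (gg s hs a - ls s hs a)) \<le> Ba / (2 * gamma T)"
  proof -
    have "2 * gamma T * (\<Sum>s<T. I s * (gg s hs a - ls s hs a)) \<le> Ba"
      using ga unfolding ia by (simp add: sum_distrib_left)
    then show ?thesis using gT by (simp add: field_simps)
  qed
  have y0: "(\<Sum>s<T. (eta (Suc s) / 2 + gamma (Suc s)) * u s) \<le> B0 + (\<Sum>s<T. (eta (Suc s) / 2 + gamma (Suc s)) * real (card (AA s hs)))"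
  proof -
    have e1: "(\<Sum>j\<in>AA s hs. (eta (Suc s) / 2 + gamma (Suc s)) * (gg s hs j - ls s hs j))
        = (eta (Suc s) / 2 + gamma (Suc s)) * u s - (eta (Suc s) / 2 + gamma (Suc s)) * (\<Sum>j\<in>AA s hs. ls s hs j)" for s
      unfolding u_def by (simp add: sum_distrib_left[symmetric] sum_subtractf right_diff_distrib)
    have e2: "(eta (Suc s) / 2 + gamma (Suc s)) * (\<Sum>j\<in>AA s hs. ls s hs j) \<le> (eta (Suc s) / 2 + gamma (Suc s)) * real (card (AA s hs))" for s
    proof (rule mult_left_mono)
      have "(\<Sum>j\<in>AA s hs. ls s hs j) \<le> (\<Sum>j\<in>AA s hs. 1)"
        using Asub[of s] unfolding ls_def by (intro sum_mono) (use ell_range in auto)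
      then show "(\<Sum>j\<in>AA s hs. ls s hs j) \<le> real (card (AA s hs))" by simp
      show "0 \<le> eta (Suc s) / 2 + gamma (Suc s)" using eta_pos[of "Suc s"] gamma_pos[of "Suc s"] by simp
    qed
    have "(\<Sum>s<T. (eta (Suc s) / 2 + gamma (Suc s)) * u s)
       = (\<Sum>s<T. \<Sum>j\<in>AA s hs. (eta (Suc s) / 2 + gamma (Suc s)) * (gg s hs j - ls s hs j))
         + (\<Sum>s<T. (eta (Suc s) / 2 + gamma (Suc s)) * (\<Sum>j\<in>AA s hs. ls s hs j))"
      unfolding e1 by (simp add: sum_subtractf)
    also have "\<dots> \<le> B0 + (\<Sum>s<T. (eta (Suc s) / 2 + gamma (Suc s)) * real (card (AA s hs)))"
    proof -
      have "(\<Sum>s<T. (eta (Suc s) / 2 + gamma (Suc s)) * (\<Sum>j\<in>AA s hs. ls s hs j))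
          \<le> (\<Sum>s<T. (eta (Suc s) / 2 + gamma (Suc s)) * real (card (AA s hs)))"
        by (rule sum_mono) (rule e2)
      then show ?thesis using g0 by linarith
    qed
    finally show ?thesis .
  qed
  have "(\<Sum>s<T. gamma (Suc s) * u s) + (\<Sum>s<T. eta (Suc s) / 2 * u s) = (\<Sum>s<T. (eta (Suc s) / 2 + gamma (Suc s)) * u s)"
    by (simp add: sum.distrib[symmetric] algebra_simps)
  then show ?thesis using reg1 ft2 ix y0 by linarith
qed

end

context ftarl begin

lemma main:
  fixes T :: nat and delta :: real
  assumes T: "T \<ge> 1"
    and delta: "0 < delta" "delta < 1"
    and eta_mono: "\<And>s t. 1 \<le> s \<Longrightarrow> s \<le> t \<Longrightarrow> eta t \<le> eta s"
    and gamma_mono: "\<And>s t. 1 \<le> s \<Longrightarrow> s \<le> t \<Longrightarrow> gamma t \<le> gamma s"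
    and eta_gamma: "\<And>t. t \<ge> 1 \<Longrightarrow> eta t \<le> 2 * gamma t"
  shows "measure_pmf.prob (play K eta gamma Act ell T)
           {hs. Max ((regret Act ell T hs) ` {..<K})
                  \<le> ln (real K) / eta T + ln (3 * real K / delta) / (2 * gamma T)
                     + ln (3 / delta)
                     + (\<Sum>t=1..T. (eta t / 2 + gamma t) * real (card (Act t (take (t - 1) hs))))}
         \<ge> 1 - delta"
proof -
  let ?P = "play K eta gamma Act ell T"
  define Y0 where "Y0 hs = (\<Sum>s<T. \<Sum>j\<in>AA s hs. (eta (Suc s) / 2 + gamma (Suc s)) * (gg s hs j - ls s hs j))" for hs
  define Ya where "Ya a hs = (\<Sum>s<T. \<Sum>j\<in>AA s hs. (if j = a then 2 * gamma T else 0) * (gg s hs j - ls s hs j))" for a hs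
  have fin: "finite (set_pmf ?P)" by (rule finite_play)
  have int: "integrable (measure_pmf ?P) f" for f :: "nat list \<Rightarrow> real"
    by (rule integrable_measure_pmf_finite[OF fin])
  have E0: "measure_pmf.expectation ?P (\<lambda>hs. exp (Y0 hs)) \<le> 1"
    unfolding Y0_def
  proof (rule conc[where al = "\<lambda>s hs j. eta (Suc s) / 2 + gamma (Suc s)" and n = T])
    fix s hs j assume "s < T" "j \<in> AA s hs"
    show "0 \<le> eta (Suc s) / 2 + gamma (Suc s) \<and> eta (Suc s) / 2 + gamma (Suc s) \<le> 2 * gamma (Suc s)"
      using eta_pos[of "Suc s"] gamma_pos[of "Suc s"] eta_gamma[of "Suc s"] by simp
  qed simp
  have Ea: "measure_pmf.expectation ?P (\<lambda>hs. exp (Ya a hs)) \<le> 1" for a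
    unfolding Ya_def
  proof (rule conc[where al = "\<lambda>s hs j. if j = a then 2 * gamma T else 0" and n = T])
    fix s hs j assume s: "s < T" and "j \<in> AA s hs"
    have "gamma T \<le> gamma (Suc s)" using gamma_mono[of "Suc s" T] s by simp
    then show "0 \<le> (if j = a then 2 * gamma T else 0) \<and> (if j = a then 2 * gamma T else 0) \<le> 2 * gamma (Suc s)"
      using gamma_pos[of T] gamma_pos[of "Suc s"] T by simp
  qed simp
  define W where "W hs = delta / 3 * exp (Y0 hs) + (\<Sum>a<K. delta / (3 * real K) * exp (Ya a hs))" for hs
  have EW: "measure_pmf.expectation ?P W \<le> 2 * delta / 3"
  proof -
    have "measure_pmf.expectation ?P W = delta / 3 * measure_pmf.expectation ?P (\<lambda>hs. exp (Y0 hs))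
        + (\<Sum>a<K. delta / (3 * real K) * measure_pmf.expectation ?P (\<lambda>hs. exp (Ya a hs)))"
      unfolding W_def by (simp add: int integral_add integral_sum)
    also have "\<dots> \<le> delta / 3 * 1 + (\<Sum>a<K. delta / (3 * real K) * 1)"
      using E0 Ea delta by (intro add_mono sum_mono mult_left_mono) auto
    also have "\<dots> = 2 * delta / 3" using K by simp
    finally show ?thesis .
  qed
  have Wnn: "0 \<le> W hs" for hs unfolding W_def using delta by (intro add_nonneg_nonneg sum_nonneg) auto
  have markov: "measure ?P {x \<in> space ?P. W x \<ge> 1} \<le> measure_pmf.expectation ?P W / 1"
    by (rule integral_Markov_inequality_measure[where A = "{}"]) (auto simp: int Wnn)
  define Good where "Good = {hs. Max ((regret Act ell T hs) ` {..<K})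
                  \<le> ln (real K) / eta T + ln (3 * real K / delta) / (2 * gamma T)
                     + ln (3 / delta)
                     + (\<Sum>t=1..T. (eta t / 2 + gamma t) * real (card (Act t (take (t - 1) hs))))}"
  have sub: "(UNIV - Good) \<inter> set_pmf ?P \<subseteq> {x \<in> space ?P. W x \<ge> 1}"
  proof
    fix hs assume hs: "hs \<in> (UNIV - Good) \<inter> set_pmf ?P"
    show "hs \<in> {x \<in> space ?P. W x \<ge> 1}"
    proof (rule ccontr)
      assume "hs \<notin> {x \<in> space ?P. W x \<ge> 1}"
      then have W1: "W hs < 1" by simp
      have t0: "delta / 3 * exp (Y0 hs) < 1"
      proof -
        have "0 \<le> (\<Sum>a<K. delta / (3 * real K) * exp (Ya a hs))" using delta by (intro sum_nonneg) auto
        then show ?thesis using W1 unfolding W_def by linarith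
      qed
      have y0: "Y0 hs \<le> ln (3 / delta)"
      proof -
        have "exp (Y0 hs) < 3 / delta" using t0 delta by (simp add: field_simps)
        then have "ln (exp (Y0 hs)) < ln (3 / delta)" using delta by (subst ln_less_cancel_iff) auto
        then show ?thesis by simp
      qed
      have ya: "Ya a hs \<le> ln (3 * real K / delta)" if a: "a < K" for a
      proof -
        have "delta / (3 * real K) * exp (Ya a hs) \<le> (\<Sum>a<K. delta / (3 * real K) * exp (Ya a hs))"
          using a delta by (intro member_le_sum) auto
        moreover have "delta / 3 * exp (Y0 hs) \<ge> 0" using delta by simp
        ultimately have "delta / (3 * real K) * exp (Ya a hs) < 1" using W1 unfolding W_def by linarith
        then have "exp (Ya a hs) < 3 * real K / delta" using delta K by (simp add: field_simps)
        then have "ln (exp (Ya a hs)) < ln (3 * real K / delta)" using delta K by (subst ln_less_cancel_iff) auto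
        then show ?thesis by simp
      qed
      have hsP: "hs \<in> set_pmf ?P" using hs by blast
      have cardeq: "(\<Sum>t=1..T. (eta t / 2 + gamma t) * real (card (Act t (take (t - 1) hs))))
          = (\<Sum>s<T. (eta (Suc s) / 2 + gamma (Suc s)) * real (card (AA s hs)))"
        unfolding AA_def by (simp add: sum.atLeast1_atMost_eq)
      have "regret Act ell T hs a \<le> ln (real K) / eta T + ln (3 * real K / delta) / (2 * gamma T)
                     + ln (3 / delta)
                     + (\<Sum>t=1..T. (eta t / 2 + gamma t) * real (card (Act t (take (t - 1) hs))))"
        if a: "a < K" for a
        unfolding cardeq
        by (rule det_bound[OF T eta_mono hsP a]) (use y0 ya[OF a] in \<open>simp_all add: Y0_def Ya_def\<close>)
      moreover have "0 \<in> {..<K}" using K by simp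
      then have "{..<K} \<noteq> {}" by blast
      ultimately have "hs \<in> Good" unfolding Good_def by (simp add: Max_le_iff)
      then show False using hs by blast
    qed
  qed
  have "measure_pmf.prob ?P (UNIV - Good) = measure_pmf.prob ?P ((UNIV - Good) \<inter> set_pmf ?P)"
    by (simp add: measure_Int_set_pmf)
  also have "\<dots> \<le> measure ?P {x \<in> space ?P. W x \<ge> 1}"
    by (rule measure_pmf.finite_measure_mono[OF sub]) simp
  also have "\<dots> \<le> 2 * delta / 3" using markov EW by simp
  finally have bad: "measure_pmf.prob ?P (UNIV - Good) \<le> 2 * delta / 3" .
  have "measure_pmf.prob ?P Good = 1 - measure_pmf.prob ?P (UNIV - Good)"
    using measure_pmf.prob_compl[of "UNIV - Good" ?P] by (simp add: Diff_Diff_Int)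
  then have "measure_pmf.prob ?P Good \<ge> 1 - delta" using bad delta by linarith
  then show ?thesis unfolding Good_def .
qed

end

theorem theoremA3:
  fixes K T :: nat and delta :: real
    and eta gamma :: "nat \<Rightarrow> real"
    and Act :: "nat \<Rightarrow> nat list \<Rightarrow> nat set"
    and ell :: "nat \<Rightarrow> nat list \<Rightarrow> nat \<Rightarrow> real"
  assumes K: "K \<ge> 2"
    and T: "T \<ge> 1"
    and delta: "0 < delta" "delta < 1"
    and eta_pos: "\<And>t. t \<ge> 1 \<Longrightarrow> eta t > 0"
    and gamma_pos: "\<And>t. t \<ge> 1 \<Longrightarrow> gamma t > 0"
    and eta_mono: "\<And>s t. 1 \<le> s \<Longrightarrow> s \<le> t \<Longrightarrow> eta t \<le> eta s"
    and gamma_mono: "\<And>s t. 1 \<le> s \<Longrightarrow> s \<le> t \<Longrightarrow> gamma t \<le> gamma s"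
    and eta_gamma: "\<And>t. t \<ge> 1 \<Longrightarrow> eta t \<le> 2 * gamma t"
    and Act_sub: "\<And>t h. t \<ge> 1 \<Longrightarrow> Act t h \<subseteq> {..<K}"
    and Act_ne: "\<And>t h. t \<ge> 1 \<Longrightarrow> Act t h \<noteq> {}"
    and ell_range: "\<And>t h i. t \<ge> 1 \<Longrightarrow> i < K \<Longrightarrow> 0 \<le> ell t h i \<and> ell t h i \<le> 1"
  shows "measure_pmf.prob (play K eta gamma Act ell T)
           {hs. Max ((regret Act ell T hs) ` {..<K})
                  \<le> ln (real K) / eta T + ln (3 * real K / delta) / (2 * gamma T)
                     + ln (3 / delta)
                     + (\<Sum>t=1..T. (eta t / 2 + gamma t) * real (card (Act t (take (t - 1) hs))))}
         \<ge> 1 - delta"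
  proof -
  interpret ftarl K eta gamma Act ell
    by unfold_locales (use assms in auto)
  show ?thesis by (rule main[OF T delta eta_mono gamma_mono eta_gamma])
qed

end
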